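(* In the setting described in the context, let $\mathcal{Y}$ be a representative set with function $A$ and projector $P$, let $\nu=P_\sharp\mu_A$, and let $g\in\mathcal{G}$ with $\int A\circ g\,d\mu<\infty$. Let $g_\star\nu:=P_\sharp\big((g_\sharp\mu)_A\big)$ be the normalized measure associated (in the same way as $\nu$ is associated with $\mu$) with the invariant measure $g_\sharp\mu$. Then $$g_\star\nu=(P\circ g)_\sharp\,\nu_C,\qquad C=A\circ g,$$ where $\nu_C$ is the probability measure on $\mathcal{Y}$ with $d\nu_C/d\nu=C/\int C\,d\nu$.
   Context: Let $(\mathcal{X},\Sigma)$ be a measurable space. A flow on $\mathcal{X}$ is a family $(\Phi^t)_{t\in\mathbb{R}}$ of bijective measurable maps $\mathcal{X}\to\mathcal{X}$ with $\Phi^{t_1}\circ\Phi^{t_2}=\Phi^{t_1+t_2}$, such that $(x,t)\mapsto\Phi^t(x)$ is measurable. $f_\sharp\rho=\rho\circ f^{-1}$ denotes push-forward. A probability measure $\rho$ is invariant if $\Phi^t_\sharp\rho=\rho$ for all $t$. Fix a flow $\Phi^t$ and an invariant probability measure $\mu$ on $\mathcal{X}$. Let $h^a$, $a>0$, be bijective measurable maps of $\mathcal{X}$ and $\mathcal{G}$ a group (under composition) of bijective measurable maps of $\mathcal{X}$ such that for all $a,a_1,a_2>0$, $t\in\mathbb{R}$, $g\in\mathcal{G}$: $h^{a_1}\circ h^{a_2}=h^{a_1a_2}$, $\Phi^t\circ g=g\circ\Phi^t$, $g\circ h^a=h^a\circ g$, $\Phi^t\circ h^a=h^a\circ\Phi^{t/a}$.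 (Then $g_\sharp\mu$ is again invariant.) A set $\mathcal{Y}\subset\mathcal{X}$ is a representative set if for every $x$ there is a unique $a=A(x)>0$ with $h^a(x)\in\mathcal{Y}$, with $A:\mathcal{X}\to(0,\infty)$ measurable and $\int A\,d\mu<\infty$; the projector is $P(x)=h^{A(x)}(x)$. For a measure $\rho$ and positive measurable $B$ with $0<\int B\,d\rho<\infty$, $\rho_B$ is the probability measure with $d\rho_B/d\rho=B/\int B\,d\rho$. *)

theory Defs
  imports "HOL-Probability.Probability"
begin

definition bij_meas :: "'a measure \<Rightarrow> ('a \<Rightarrow> 'a) \<Rightarrow> bool" where
  "bij_meas M f \<longleftrightarrow> f \<in> M \<rightarrow>\<^sub>M M \<and> bij_betw f (space M) (space M)"

definition is_flow :: "'a measure \<Rightarrow> (real \<Rightarrow> 'a \<Rightarrow> 'a) \<Rightarrow> bool" where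
  "is_flow M \<Phi> \<longleftrightarrow>
     (\<forall>t. bij_meas M (\<Phi> t)) \<and>
     (\<forall>t1 t2. \<forall>x\<in>space M. \<Phi> t1 (\<Phi> t2 x) = \<Phi> (t1 + t2) x) \<and>
     (\<lambda>(x, t). \<Phi> t x) \<in> M \<Otimes>\<^sub>M borel \<rightarrow>\<^sub>M M"

definition invariant_prob :: "'a measure \<Rightarrow> (real \<Rightarrow> 'a \<Rightarrow> 'a) \<Rightarrow> 'a measure \<Rightarrow> bool" where
  "invariant_prob M \<Phi> \<rho> \<longleftrightarrow>
     prob_space \<rho> \<and> sets \<rho> = sets M \<and> (\<forall>t. distr \<rho> M (\<Phi> t) = \<rho>)"

text \<open>G is a group (under composition) of bijective measurable maps of M
  (maps are identified by their values on space M).\<close>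
definition is_map_group :: "'a measure \<Rightarrow> ('a \<Rightarrow> 'a) set \<Rightarrow> bool" where
  "is_map_group M G \<longleftrightarrow>
     (\<forall>g\<in>G. bij_meas M g) \<and>
     (\<exists>e\<in>G. \<forall>x\<in>space M. e x = x) \<and>
     (\<forall>f\<in>G. \<forall>g\<in>G. \<exists>k\<in>G. \<forall>x\<in>space M. k x = f (g x)) \<and>
     (\<forall>g\<in>G. \<exists>k\<in>G. \<forall>x\<in>space M. k (g x) = x \<and> g (k x) = x)"

definition representative_set ::
    "'a measure \<Rightarrow> (real \<Rightarrow> 'a \<Rightarrow> 'a) \<Rightarrow> 'a measure \<Rightarrow> 'a set \<Rightarrow> ('a \<Rightarrow> real) \<Rightarrow> bool" where
  "representative_set M h \<mu> Y A \<longleftrightarrow>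
     Y \<subseteq> space M \<and>
     (\<forall>x\<in>space M. A x > 0 \<and> h (A x) x \<in> Y \<and> (\<forall>a. a > 0 \<and> h a x \<in> Y \<longrightarrow> a = A x)) \<and>
     A \<in> borel_measurable M \<and>
     (\<integral>\<^sup>+ x. ennreal (A x) \<partial>\<mu>) < \<infinity>"

definition projector :: "(real \<Rightarrow> 'a \<Rightarrow> 'a) \<Rightarrow> ('a \<Rightarrow> real) \<Rightarrow> 'a \<Rightarrow> 'a" where
  "projector h A x = h (A x) x"

definition normalized :: "'a measure \<Rightarrow> ('a \<Rightarrow> real) \<Rightarrow> 'a measure" where
  "normalized \<rho> B = density \<rho> (\<lambda>x. ennreal (B x / (\<integral>x. B x \<partial>\<rho>)))"

end

theory Submission
  imports Defs
begin

theorem theorem2: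
  fixes M :: "'a measure"
    and \<Phi> :: "real \<Rightarrow> 'a \<Rightarrow> 'a"
    and h :: "real \<Rightarrow> 'a \<Rightarrow> 'a"
    and G :: "('a \<Rightarrow> 'a) set"
    and \<mu> :: "'a measure"
    and Y :: "'a set"
    and A :: "'a \<Rightarrow> real"
    and g :: "'a \<Rightarrow> 'a"
  assumes flow: "is_flow M \<Phi>"
    and inv: "invariant_prob M \<Phi> \<mu>"
    and h_bij: "\<And>a. a > 0 \<Longrightarrow> bij_meas M (h a)"
    and G_group: "is_map_group M G"
    and h_mult: "\<And>a1 a2 x. a1 > 0 \<Longrightarrow> a2 > 0 \<Longrightarrow> x \<in> space M \<Longrightarrow> h a1 (h a2 x) = h (a1 * a2) x"
    and \<Phi>_G: "\<And>t g x. g \<in> G \<Longrightarrow> x \<in> space M \<Longrightarrow> \<Phi> t (g x) = g (\<Phi> t x)"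
    and G_h: "\<And>a g x. a > 0 \<Longrightarrow> g \<in> G \<Longrightarrow> x \<in> space M \<Longrightarrow> g (h a x) = h a (g x)"
    and \<Phi>_h: "\<And>t a x. a > 0 \<Longrightarrow> x \<in> space M \<Longrightarrow> \<Phi> t (h a x) = h a (\<Phi> (t / a) x)"
    and rep: "representative_set M h \<mu> Y A"
    and P_meas: "projector h A \<in> M \<rightarrow>\<^sub>M M"
    and g_G: "g \<in> G"
    and Ag_fin: "(\<integral>\<^sup>+ x. ennreal (A (g x)) \<partial>\<mu>) < \<infinity>"
  shows "distr (normalized (distr \<mu> M g) A) M (projector h A)
       = distr (normalized (distr (normalized \<mu> A) M (projector h A)) (\<lambda>x. A (g x)))
               M (projector h A \<circ> g)"
proof -
  have gM: "g \<in> M \<rightarrow>\<^sub>M M" using G_group g_G unfolding is_map_group_def bij_meas_def by blast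
  have sp: "sets \<mu> = sets M" and ps: "prob_space \<mu>" using inv unfolding invariant_prob_def by auto
  have spc: "space \<mu> = space M" using sp by (rule sets_eq_imp_space_eq)
  have AM: "A \<in> borel_measurable M" and Apos: "\<And>x. x \<in> space M \<Longrightarrow> A x > 0"
    and AY: "\<And>x. x \<in> space M \<Longrightarrow> h (A x) x \<in> Y"
    and Auniq: "\<And>x a. x \<in> space M \<Longrightarrow> a > 0 \<Longrightarrow> h a x \<in> Y \<Longrightarrow> a = A x"
    and Afin: "(\<integral>\<^sup>+ x. ennreal (A x) \<partial>\<mu>) < \<infinity>"
    using rep unfolding representative_set_def by auto
  have hsp: "\<And>a x. a > 0 \<Longrightarrow> x \<in> space M \<Longrightarrow> h a x \<in> space M"
    using h_bij unfolding bij_meas_def by (meson measurable_space)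
  have gsp: "\<And>x. x \<in> space M \<Longrightarrow> g x \<in> space M" using gM by (meson measurable_space)
  have Ah: "A (h a y) = A y / a" if "a > 0" "y \<in> space M" for a y
  proof -
    have "h (A y / a) (h a y) = h (A y) y" using h_mult[of "A y / a" a y] that Apos[OF that(2)] by simp
    hence "h (A y / a) (h a y) \<in> Y" using AY that by simp
    thus ?thesis using Auniq[of "h a y" "A y / a"] hsp that Apos[OF that(2)] by simp
  qed
  have Ph: "projector h A (h a y) = projector h A y" if "a > 0" "y \<in> space M" for a y
    unfolding projector_def Ah[OF that] using h_mult[of "A y / a" a y] that Apos[OF that(2)] by simp
  have gP: "g (projector h A x) = h (A x) (g x)" if "x \<in> space M" for x
    unfolding projector_def using G_h[OF Apos[OF that] g_G that] .
  have AgP: "A (g (projector h A x)) = A (g x) / A x" if "x \<in> space M" for x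
    using gP[OF that] Ah[OF Apos[OF that] gsp[OF that]] by simp
  have PgP: "projector h A (g (projector h A x)) = projector h A (g x)" if "x \<in> space M" for x
    using gP[OF that] Ph[OF Apos[OF that] gsp[OF that]] by simp
  have gMu: "g \<in> \<mu> \<rightarrow>\<^sub>M M" using gM measurable_cong_sets[OF sp refl] by blast
  have PMu: "projector h A \<in> \<mu> \<rightarrow>\<^sub>M M" using P_meas measurable_cong_sets[OF sp refl] by blast
  have AMu: "A \<in> borel_measurable \<mu>" using AM measurable_cong_sets[OF sp refl] by blast
  have AgMu: "(\<lambda>x. A (g x)) \<in> borel_measurable \<mu>" using AM gMu by measurable
  have gPm: "(\<lambda>x. g (projector h A x)) \<in> \<mu> \<rightarrow>\<^sub>M M"
    using measurable_comp[OF PMu gM] by (simp add: comp_def)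
  have AgPm: "(\<lambda>x. A (g (projector h A x))) \<in> borel_measurable \<mu>"
    using measurable_compose[OF gPm AM] .
  have PgM: "projector h A \<circ> g \<in> M \<rightarrow>\<^sub>M M" using measurable_comp[OF gM P_meas] .
  define Z0 where "Z0 = (\<integral>x. A x \<partial>\<mu>)"
  define Z1 where "Z1 = (\<integral>x. A (g x) \<partial>\<mu>)"
  have intA: "integrable \<mu> A"
  proof (rule integrableI_bounded[OF AMu])
    have "(\<integral>\<^sup>+ x. ennreal (norm (A x)) \<partial>\<mu>) = (\<integral>\<^sup>+ x. ennreal (A x) \<partial>\<mu>)"
      using Apos spc by (intro nn_integral_cong) (auto simp: less_imp_le)
    thus "(\<integral>\<^sup>+ x. ennreal (norm (A x)) \<partial>\<mu>) < \<infinity>" using Afin by simp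
  qed
  have Z0pos: "Z0 > 0"
  proof -
    have "Z0 \<ge> 0" unfolding Z0_def using Apos spc by (intro integral_nonneg_AE) (auto simp: less_imp_le)
    moreover have "Z0 \<noteq> 0"
    proof
      assume "Z0 = 0"
      hence "AE x in \<mu>. A x = 0" unfolding Z0_def using intA Apos spc
        by (subst (asm) integral_nonneg_eq_0_iff_AE) (auto simp: less_imp_le)
      hence "AE x in \<mu>. False" using AE_space[of \<mu>]
        by eventually_elim (use Apos spc in force)
      thus False using ps prob_space.AE_False by blast
    qed
    ultimately show ?thesis by simp
  qed
  have Z1nn: "Z1 \<ge> 0" unfolding Z1_def using Apos spc gsp by (intro integral_nonneg_AE) (auto simp: less_imp_le)
  have dMu: "distr \<mu> M g = distr \<mu> M g" ..
  have L1: "(\<integral>x. A x \<partial>distr \<mu> M g) = Z1" unfolding Z1_def by (rule integral_distr[OF gMu AM])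
  have LHS: "distr (normalized (distr \<mu> M g) A) M (projector h A)
      = distr (density \<mu> (\<lambda>x. ennreal (A (g x) / Z1))) M (projector h A \<circ> g)"
    unfolding normalized_def L1
    apply (subst density_distr)
      apply (use AM in measurable)
     apply (rule gMu)
    apply (subst distr_distr)
      apply (rule P_meas)
     apply (use gMu in measurable)
    done
  define \<nu> where "\<nu> = distr (normalized \<mu> A) M (projector h A)"
  have nd: "normalized \<mu> A = density \<mu> (\<lambda>x. ennreal (A x / Z0))" unfolding normalized_def Z0_def ..
  have PMd: "projector h A \<in> density \<mu> (\<lambda>x. ennreal (A x / Z0)) \<rightarrow>\<^sub>M M" using PMu by simp
  have Zc: "(\<integral>x. A (g x) \<partial>\<nu>) = Z1 / Z0"
  proof -
    have "(\<integral>x. A (g x) \<partial>\<nu>) = (\<integral>x. A (g (projector h A x)) \<partial>density \<mu> (\<lambda>x. ennreal (A x / Z0)))"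
      unfolding \<nu>_def nd by (rule integral_distr[OF PMd]) (use AM gM in measurable)
    also have "\<dots> = (\<integral>x. (A x / Z0) * A (g (projector h A x)) \<partial>\<mu>)"
      using AMu Apos spc Z0pos PMu gM AM
      by (subst integral_density) (auto intro!: AE_I2 simp: less_imp_le)
    also have "\<dots> = (\<integral>x. A (g x) / Z0 \<partial>\<mu>)"
    proof (rule Bochner_Integration.integral_cong[OF refl])
      fix x assume "x \<in> space \<mu>"
      hence xs: "x \<in> space M" using spc by simp
      show "A x / Z0 * A (g (projector h A x)) = A (g x) / Z0"
        unfolding AgP[OF xs] using Apos[OF xs] by (simp add: field_simps)
    qed
    also have "\<dots> = Z1 / Z0" unfolding Z1_def by simp
    finally show ?thesis .
  qed
  have RHS: "distr (normalized \<nu> (\<lambda>x. A (g x))) M (projector h A \<circ> g)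
     = distr (density \<mu> (\<lambda>x. ennreal (A (g x) / Z1))) M (projector h A \<circ> g)"
  proof -
    have "normalized \<nu> (\<lambda>x. A (g x)) = density \<nu> (\<lambda>x. ennreal (A (g x) / (Z1 / Z0)))"
      unfolding normalized_def Zc ..
    also have "\<dots> = distr (density (density \<mu> (\<lambda>x. ennreal (A x / Z0))) (\<lambda>x. ennreal (A (g (projector h A x)) / (Z1 / Z0)))) M (projector h A)"
      unfolding \<nu>_def nd by (rule density_distr[OF _ PMd]) (use AM gM in measurable)
    also have "\<dots> = distr (density \<mu> (\<lambda>x. ennreal (A x / Z0) * ennreal (A (g (projector h A x)) / (Z1 / Z0)))) M (projector h A)"
      proof -
      have m1: "(\<lambda>x. ennreal (A x / Z0)) \<in> borel_measurable \<mu>" using AMu by measurable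
      have m2: "(\<lambda>x. ennreal (A (g (projector h A x)) / (Z1 / Z0))) \<in> borel_measurable \<mu>"
        using AgPm by measurable
      show ?thesis using density_density_eq[OF m1 m2] by simp
    qed
    finally have e: "normalized \<nu> (\<lambda>x. A (g x)) = distr (density \<mu> (\<lambda>x. ennreal (A x / Z0) * ennreal (A (g (projector h A x)) / (Z1 / Z0)))) M (projector h A)" .
    have "distr (normalized \<nu> (\<lambda>x. A (g x))) M (projector h A \<circ> g)
       = distr (density \<mu> (\<lambda>x. ennreal (A x / Z0) * ennreal (A (g (projector h A x)) / (Z1 / Z0)))) M (projector h A \<circ> g \<circ> projector h A)"
      proof -
      have "projector h A \<in> density \<mu> (\<lambda>x. ennreal (A x / Z0) * ennreal (A (g (projector h A x)) / (Z1 / Z0))) \<rightarrow>\<^sub>M M"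
        using PMu by simp
      from distr_distr[OF PgM this] show ?thesis unfolding e by simp
    qed
    also have "\<dots> = distr (density \<mu> (\<lambda>x. ennreal (A (g x) / Z1))) M (projector h A \<circ> g)"
    proof (rule distr_cong)
      show "density \<mu> (\<lambda>x. ennreal (A x / Z0) * ennreal (A (g (projector h A x)) / (Z1 / Z0))) = density \<mu> (\<lambda>x. ennreal (A (g x) / Z1))"
      proof (rule density_cong)
        show "(\<lambda>x. ennreal (A x / Z0) * ennreal (A (g (projector h A x)) / (Z1 / Z0))) \<in> borel_measurable \<mu>"
          using AMu AgPm by measurable
        show "(\<lambda>x. ennreal (A (g x) / Z1)) \<in> borel_measurable \<mu>" using AgMu by measurable
        show "AE x in \<mu>. ennreal (A x / Z0) * ennreal (A (g (projector h A x)) / (Z1 / Z0)) = ennreal (A (g x) / Z1)"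
        proof (rule AE_I2)
          fix x assume x: "x \<in> space \<mu>"
          hence xs: "x \<in> space M" using spc by simp
          have p1: "A x > 0" "A (g x) > 0" using Apos xs gsp by auto
          have "ennreal (A x / Z0) * ennreal (A (g (projector h A x)) / (Z1 / Z0))
              = ennreal (A x / Z0 * (A (g (projector h A x)) / (Z1 / Z0)))"
          proof (rule ennreal_mult[symmetric])
            show "0 \<le> A x / Z0" using p1 Z0pos by simp
            show "0 \<le> A (g (projector h A x)) / (Z1 / Z0)" unfolding AgP[OF xs]
              using p1 Z0pos Z1nn by simp
          qed
          also have "A x / Z0 * (A (g (projector h A x)) / (Z1 / Z0)) = A (g x) / Z1"
            unfolding AgP[OF xs] using p1 Z0pos by (cases "Z1 = 0") (simp_all add: field_simps)
          finally show "ennreal (A x / Z0) * ennreal (A (g (projector h A x)) / (Z1 / Z0)) = ennreal (A (g x) / Z1)" .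
        qed
      qed
    qed (use PgP spc in auto)
    finally show ?thesis .
  qed
  show ?thesis using LHS RHS unfolding \<nu>_def by simp
qed

end
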